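(* For every integer $\nu\ge0$, $$\operatorname{sech}^5(D/2)\,0^{[2\nu]}=\tfrac43\sinh(D)\,0^{[2\nu+3]},$$ and consequently $$\frac43\sum_{k=0}^{\nu+1}t(2\nu+3,2k+1)=\frac{(2\nu)!}{2^{2\nu}}\binom{-5/2}{\nu}.$$
   Context: Central factorials: $x^{[0]}=1$, $x^{[n]}=x\prod_{j=1}^{n-1}(x+\tfrac n2-j)$ for $n\ge1$; $t(n,k)$ is defined by $x^{[n]}=\sum_k t(n,k)x^k$. For a power series $h(D)=\sum_k h_kD^k$ (the Taylor series at $0$ of the indicated function of $D$), $h(D)\,0^{[n]}:=\sum_k h_k\,k!\,t(n,k)$. *)

theory Defs
  imports "HOL-Analysis.Analysis" "HOL-Computational_Algebra.Polynomial"
begin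

definition central_fact :: "nat \<Rightarrow> real poly" where
  "central_fact n = (if n = 0 then 1
     else [:0, 1:] * (\<Prod>j\<in>{1..<n}. [: real n / 2 - real j, 1 :]))"

definition cfn :: "nat \<Rightarrow> nat \<Rightarrow> real" where
  "cfn n k = coeff (central_fact n) k"

text \<open>h(D) 0^[n] = sum_k h_k k! t(n,k), where h_k k! is the k-th derivative of h at 0
  (h_k the Taylor coefficients at 0). Since t(n,k) = 0 for k > n the sum is over k \<le> n.\<close>
definition op_zero :: "(real \<Rightarrow> real) \<Rightarrow> nat \<Rightarrow> real" where
  "op_zero h n = (\<Sum>k\<le>n. (deriv ^^ k) h 0 * cfn n k)"

end

theory Submission
  imports Defs
begin


lemma cf_rec: "central_fact (Suc (Suc n)) = [: -((real n)^2/4), 0, 1 :] * central_fact n"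
proof (cases n)
  case 0
  then show ?thesis by (simp add: central_fact_def)
next
  case (Suc m)
  have "(\<Prod>j\<in>{1..<Suc (Suc n)}. [: real (Suc (Suc n)) / 2 - real j, 1 :])
     = (\<Prod>j\<in>{1..<Suc n}. [: real (Suc (Suc n)) / 2 - real j, 1 :]) * [: - real n / 2, 1:]"
  proof -
    have e: "real (Suc (Suc n)) / 2 - real (Suc n) = - real n / 2" by (simp add: field_simps)
    show ?thesis by (subst prod.atLeastLessThan_Suc) (simp, simp only: e)
  qed
  also have "(\<Prod>j\<in>{1..<Suc n}. [: real (Suc (Suc n)) / 2 - real j, 1 :])
     = [: real n / 2, 1:] * (\<Prod>j\<in>{Suc 1..<Suc n}. [: real (Suc (Suc n)) / 2 - real j, 1 :])"
    using Suc by (subst prod.atLeast_Suc_lessThan) (auto simp: field_simps)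
  also have "(\<Prod>j\<in>{Suc 1..<Suc n}. [: real (Suc (Suc n)) / 2 - real j, 1 :])
     = (\<Prod>j\<in>{1..<n}. [: real n / 2 - real j, 1 :])"
    by (subst prod.shift_bounds_Suc_ivl) (simp add: field_simps)
  finally have *: "(\<Prod>j\<in>{1..<Suc (Suc n)}. [: real (Suc (Suc n)) / 2 - real j, 1 :])
     = ([: real n / 2, 1:] * [: - real n / 2, 1:]) * (\<Prod>j\<in>{1..<n}. [: real n / 2 - real j, 1 :])"
    by (simp only: ac_simps)
  have **: "[: real n / 2, 1:] * [: - real n / 2, 1:] = [: -((real n)^2/4), 0, 1 :]"
    by (simp add: power2_eq_square)
  have A: "central_fact (Suc (Suc n)) = [:0,1:] * (\<Prod>j\<in>{1..<Suc (Suc n)}. [: real (Suc (Suc n)) / 2 - real j, 1 :])"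
    unfolding central_fact_def by (rule if_not_P) simp
  have B: "central_fact n = [:0,1:] * (\<Prod>j\<in>{1..<n}. [: real n / 2 - real j, 1 :])"
    unfolding central_fact_def using Suc by (intro if_not_P) simp
  show ?thesis unfolding A B * ** by (simp only: ac_simps)
qed

lemma cf_degree: "degree (central_fact n) \<le> n"
proof (cases "n = 0")
  case True then show ?thesis by (simp add: central_fact_def)
next
  case False
  have "degree (\<Prod>j\<in>{1..<n}. [: real n / 2 - real j, 1 :]) \<le> (\<Sum>j\<in>{1..<n}. degree [: real n / 2 - real j, 1 :])"
    using degree_prod_sum_le[of "{1..<n}" "\<lambda>j. [: real n / 2 - real j, 1 :]"] by (simp add: o_def)
  also have "\<dots> = n - 1" by simp
  finally show ?thesis using False unfolding central_fact_def
    using degree_mult_le[of "[:0,1::real:]" "(\<Prod>j\<in>{1..<n}. [: real n / 2 - real j, 1 :])"]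
    by simp
qed

lemma opz_rec: "op_zero h (Suc (Suc n)) = op_zero ((deriv ^^ 2) h) n - (real n)^2/4 * op_zero h n"
proof -
  let ?p = "central_fact n"
  let ?c = "(real n)^2/4"
  have q: "central_fact (Suc (Suc n)) = smult (- ?c) ?p + pCons 0 (pCons 0 ?p)"
    by (simp add: cf_rec mult_pCons_left)
  have z: "coeff ?p (Suc n) = 0" "coeff ?p (Suc (Suc n)) = 0"
    using cf_degree[of n] by (auto intro: coeff_eq_0)
  have d: "(deriv ^^ Suc (Suc k)) h = (deriv ^^ k) ((deriv ^^ 2) h)" for k
  proof -
    have "(deriv ^^ (k+2)) h = (deriv^^k) ((deriv^^2) h)" by (simp only: funpow_add o_apply)
    then show ?thesis by (simp only: add_2_eq_Suc')
  qed
  have "op_zero h (Suc (Suc n)) = (\<Sum>k\<le>Suc (Suc n). (deriv ^^ k) h 0 * coeff (pCons 0 (pCons 0 ?p)) k)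
      - ?c * (\<Sum>k\<le>Suc (Suc n). (deriv ^^ k) h 0 * coeff ?p k)"
    unfolding op_zero_def cfn_def q
    by (simp add: algebra_simps sum.distrib sum_distrib_left sum_subtractf)
  also have "(\<Sum>k\<le>Suc (Suc n). (deriv ^^ k) h 0 * coeff (pCons 0 (pCons 0 ?p)) k)
     = (\<Sum>k\<le>n. (deriv ^^ Suc (Suc k)) h 0 * coeff ?p k)"
    by (simp add: sum.atMost_Suc_shift del: sum.atMost_Suc funpow.simps)
  also have "(\<Sum>k\<le>Suc (Suc n). (deriv ^^ k) h 0 * coeff ?p k) = (\<Sum>k\<le>n. (deriv ^^ k) h 0 * coeff ?p k)"
    using z by simp
  finally show ?thesis unfolding op_zero_def cfn_def d by simp
qed



lemma deriv_sinh_fun: "deriv sinh = (cosh :: real \<Rightarrow> real)"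
  by (rule ext, rule DERIV_imp_deriv, auto intro!: derivative_eq_intros)
lemma deriv_cosh_fun: "deriv cosh = (sinh :: real \<Rightarrow> real)"
  by (rule ext, rule DERIV_imp_deriv, auto intro!: derivative_eq_intros)

lemma derivs_sinh: "(deriv ^^ k) sinh = (if even k then sinh else (cosh :: real \<Rightarrow> real))"
  by (induction k) (auto simp: deriv_sinh_fun deriv_cosh_fun)

lemma opz_sinh_1: "op_zero sinh 1 = 1"
  by (simp add: op_zero_def cfn_def central_fact_def deriv_sinh_fun)

lemma opz_sinh: "4/3 * op_zero sinh (2 * \<nu> + 3) = fact (2 * \<nu>) / 2 ^ (2 * \<nu>) * ((- 5 / 2 :: real) gchoose \<nu>)"
proof (induction \<nu>)
  case 0
  have "op_zero sinh 3 = 3/4"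
    using opz_rec[of sinh 1] opz_sinh_1 by (simp add: numeral_3_eq_3 derivs_sinh)
  then show ?case by simp
next
  case (Suc v)
  have r: "op_zero sinh (2 * Suc v + 3) = (1 - (real (2 * v + 3)) ^ 2 / 4) * op_zero sinh (2 * v + 3)"
    using opz_rec[of sinh "2 * v+3"] by (simp add: derivs_sinh algebra_simps)
  have g: "((- 5 / 2 :: real) gchoose Suc v) = (- 5/2 - real v) / real (Suc v) * ((- 5 / 2 :: real) gchoose v)"
    using gbinomial_mult_1[of "- 5/2 :: real" v] by (simp add: field_simps)
  have f: "fact (2 * Suc v) = (2*real v+2)*(2*real v+1) * (fact (2 * v) :: real)"
    by (simp add: fact_Suc algebra_simps)
  let ?X = "op_zero sinh (2 * v + 3)" and ?B = "((- 5 / 2 :: real) gchoose v)" and ?P = "(2::real) ^ (2 * v)"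
  have ih: "fact (2 * v) * ?B = 4/3 * ?X * ?P" using Suc.IH by (simp add: field_simps)
  have canc: "\<And>a b c. a / (b * ?P) * (c * ?P) = a / b * (c::real)" by simp
  have p: "(2::real) ^ (2 * Suc v) = 4 * ?P" by (simp add: power_add)
  have "fact (2 * Suc v) / 2 ^ (2 * Suc v) * ((- 5 / 2 :: real) gchoose Suc v)
     = (2*real v+2)*(2*real v+1) * (- 5/2 - real v) / (real (Suc v) * 4 * ?P) * (fact (2 * v) * ?B)"
    unfolding f g p by (simp add: field_simps)
  also have "\<dots> = (2*real v+2)*(2*real v+1) * (- 5/2 - real v) / (real (Suc v) * 4 * ?P) * (4/3 * ?X * ?P)"
    by (simp only: ih)
  also have "\<dots> = (2*real v+2)*(2*real v+1) * (- 5/2 - real v) / (real (Suc v) * 4) * (4/3 * ?X)"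
    by (rule canc) 
  also have "\<dots> = 4/3 * op_zero sinh (2 * Suc v + 3)"
    unfolding r by (simp add: field_simps power2_eq_square)
  finally show ?case by simp
qed



lemma alg_basis:
  fixes s c :: real assumes c: "c > 0" and cs: "c * c = s * s + 1"
  shows "(real e * (c * s ^ (e - Suc 0)) * c ^ b / 2 - s ^ e * (real b * (s * c ^ (b - Suc 0))) / 2) / (c ^ b * c ^ b)
    = real e * s ^ (e - Suc 0) / (2 * (c * c ^ b)) + real e * (s * s ^ e) / (2 * (c * c ^ b))
      - real b * (s * s ^ e) / (2 * (c * c ^ b))"
proof -
  have cb: "c ^ b > 0" using c by simp
  have 1: "c * c^b / (c^b * c^b) = (1 + s * s)/(c * c^b)"
    using c cb cs by (simp add: field_simps)
  have 2: "real b * c^(b - Suc 0) / (c^b * c^b) = real b/(c * c^b)"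
    using c by (cases b) (auto simp: field_simps)
  have 3: "real e * s^(e - Suc 0) * (1+s * s) = real e * s^(e - Suc 0) + real e * (s * s^e)"
    by (cases e) (auto simp: algebra_simps)
  have "(real e * (c * s ^ (e - Suc 0)) * c ^ b / 2 - s ^ e * (real b * (s * c ^ (b - Suc 0))) / 2) / (c ^ b * c ^ b)
     = real e * s ^ (e - Suc 0) / 2 * (c * c^b / (c^b * c^b)) - s ^ e * s / 2 * (real b * c^(b - Suc 0) / (c^b * c^b))"
    by (simp add: field_simps)
  also have "\<dots> = real e * s ^ (e - Suc 0) * (1+s * s) / (2 * (c * c ^ b)) - real b * (s * s ^ e) / (2 * (c * c ^ b))"
    unfolding 1 2 by (simp add: field_simps)
  also have "\<dots> = real e * s ^ (e - Suc 0) / (2 * (c * c ^ b)) + real e * (s * s ^ e) / (2 * (c * c ^ b))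
      - real b * (s * s ^ e) / (2 * (c * c ^ b))"
    unfolding 3 by (simp add: add_divide_distrib)
  finally show ?thesis .
qed

lemma basis_deriv:
  "((\<lambda>x. sinh(x/2)^e / cosh(x/2)^b) has_real_derivative
    (real e/2 * (sinh(x/2)^(e-1) / cosh(x/2)^(b+1)) + real e/2 * (sinh(x/2)^(e+1)/cosh(x/2)^(b+1))
     + (- real b/2) * (sinh(x/2)^(e+1)/cosh(x/2)^(b+1)))) (at x)"
  apply (rule derivative_eq_intros refl | simp)+
  apply (rule alg_basis)
   apply simp
  using cosh_square_eq[of "x/2"] apply (simp add: power2_eq_square)
  done

inductive G :: "(real \<Rightarrow> real) \<Rightarrow> bool" where
  Gb: "G (\<lambda>x. sinh(x/2)^e / cosh(x/2)^b)"
| Ga: "G f \<Longrightarrow> G g \<Longrightarrow> G (\<lambda>x. f x + g x)"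
| Gs: "G f \<Longrightarrow> G (\<lambda>x. c * f x)"

lemma G_deriv: "G f \<Longrightarrow> (\<forall>x. (f has_real_derivative deriv f x) (at x)) \<and> G (deriv f)"
proof (induction rule: G.induct)
  case (Gb e b)
  let ?D = "\<lambda>x. (real e/2 * (sinh(x/2)^(e-1) / cosh(x/2)^(b+1)) + real e/2 * (sinh(x/2)^(e+1)/cosh(x/2)^(b+1)))
     + (- real b/2) * (sinh(x/2)^(e+1)/cosh(x/2)^(b+1))"
  have d: "((\<lambda>x. sinh(x/2)^e / cosh(x/2)^b) has_real_derivative ?D x) (at x)" for x
    using basis_deriv[of e b x] by simp
  have e: "deriv (\<lambda>x. sinh(x/2)^e / cosh(x/2)^b) = ?D"
    using d by (intro ext DERIV_imp_deriv)
  have "G ?D" by (intro G.intros)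
  then show ?case using d e by simp
next
  case (Ga f g)
  have d: "((\<lambda>x. f x + g x) has_real_derivative (deriv f x + deriv g x)) (at x)" for x
    using Ga by (auto intro!: derivative_eq_intros)
  have e: "deriv (\<lambda>x. f x + g x) = (\<lambda>x. deriv f x + deriv g x)"
    using d by (intro ext DERIV_imp_deriv)
  show ?case using d e Ga by (simp add: G.intros)
next
  case (Gs f c)
  have d: "((\<lambda>x. c * f x) has_real_derivative (c * deriv f x)) (at x)" for x
    using Gs by (auto intro!: derivative_eq_intros)
  have e: "deriv (\<lambda>x. c * f x) = (\<lambda>x. c * deriv f x)"
    using d by (intro ext DERIV_imp_deriv)
  show ?case using d e Gs by (simp add: G.intros)
qed

lemma G_derivs: "G f \<Longrightarrow> G ((deriv ^^ k) f)"
  by (induction k) (auto dest: G_deriv)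

lemma G_lin: assumes "G f" "G g"
  shows "(deriv ^^ k) (\<lambda>x. c * f x + d * g x) = (\<lambda>x. c * (deriv ^^ k) f x + d * (deriv ^^ k) g x)"
proof (induction k)
  case 0 then show ?case by simp
next
  case (Suc k)
  have f: "\<forall>x. ((deriv ^^ k) f has_real_derivative deriv ((deriv ^^ k) f) x) (at x)"
    using G_deriv[OF G_derivs[OF assms(1)]] by blast
  have g: "\<forall>x. ((deriv ^^ k) g has_real_derivative deriv ((deriv ^^ k) g) x) (at x)"
    using G_deriv[OF G_derivs[OF assms(2)]] by blast
  have "((\<lambda>x. c * (deriv ^^ k) f x + d * (deriv ^^ k) g x) has_real_derivative
      (c * deriv ((deriv ^^ k) f) x + d * deriv ((deriv ^^ k) g) x)) (at x)" for x
    using f g by (auto intro!: derivative_eq_intros)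
  then have "deriv (\<lambda>x. c * (deriv ^^ k) f x + d * (deriv ^^ k) g x)
     = (\<lambda>x. c * deriv ((deriv ^^ k) f) x + d * deriv ((deriv ^^ k) g) x)"
    by (intro ext DERIV_imp_deriv)
  then show ?case using Suc by simp
qed

definition fb :: "nat \<Rightarrow> real \<Rightarrow> real" where "fb b = (\<lambda>x. 1 / cosh (x/2) ^ b)"

lemma G_fb: "G (fb b)"
  using G.Gb[of 0 b] by (simp add: fb_def)

lemma alg2:
  fixes s c :: real assumes c: "c > 0" and cs: "s * s = c * c - 1"
  shows "- real b / 2 * (1 / 2 * (1 / c ^ (b + 2)) + 1 / 2 * (s ^ 2 / c ^ (b + 2)) + - (real b + 1) / 2 * (s ^ 2 / c ^ (b + 2)))
    = real b ^ 2 / 4 * (1 / c ^ b) + - (real b * (real b + 1) / 4) * (1 / c ^ (b + 2))"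
proof -
  have t: "s ^ 2 / c ^ (b + 2) = 1 / c ^ b - 1 / c ^ (b+2)"
    using c cs by (simp add: power2_eq_square field_simps)
  show ?thesis using c by (simp only: t) (simp add: field_simps power2_eq_square)
qed

lemma fb_deriv2: "(deriv ^^ 2) (fb b) = (\<lambda>x. real b ^ 2 / 4 * fb b x + (- (real b * (real b + 1) / 4)) * fb (b + 2) x)"
proof -
  have d1: "(fb b has_real_derivative (- real b/2) * (sinh(x/2)^1/cosh(x/2)^(b+1))) (at x)" for x
    using basis_deriv[of 0 b x] by (simp add: fb_def)
  have e1: "deriv (fb b) = (\<lambda>x. (- real b/2) * (sinh(x/2)^1/cosh(x/2)^(b+1)))"
    using d1 by (intro ext DERIV_imp_deriv)
  have d2: "((\<lambda>x. (- real b/2) * (sinh(x/2)^1/cosh(x/2)^(b+1))) has_real_derivative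
     (- real b/2) * (real 1/2 * (sinh(x/2)^(1-1) / cosh(x/2)^(b+1+1)) + real 1/2 * (sinh(x/2)^(1+1)/cosh(x/2)^(b+1+1))
     + (- real (b+1)/2) * (sinh(x/2)^(1+1)/cosh(x/2)^(b+1+1)))) (at x)" for x
    by (rule DERIV_cmult[OF basis_deriv])
  have e2: "deriv (\<lambda>x. (- real b/2) * (sinh(x/2)^1/cosh(x/2)^(b+1))) x
     = real b ^ 2 / 4 * fb b x + (- (real b * (real b + 1) / 4)) * fb (b + 2) x" for x
  proof -
    have cs: "sinh (x/2) * sinh (x/2) = cosh (x/2) * cosh (x/2) - 1"
      using cosh_square_eq[of "x/2"] by (simp add: power2_eq_square)
    show ?thesis unfolding DERIV_imp_deriv[OF d2] fb_def
      using alg2[OF _ cs, of b] by (simp add: numeral_2_eq_2 add.commute)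
  qed
  have "(deriv ^^ 2) (fb b) = deriv (deriv (fb b))" by (simp add: numeral_2_eq_2)
  then show ?thesis unfolding e1 using e2 by (intro ext) simp
qed



lemma opz_lin: assumes "G f" "G g"
  shows "op_zero (\<lambda>x. c * f x + d * g x) n = c * op_zero f n + d * op_zero g n"
  unfolding op_zero_def G_lin[OF assms]
  by (simp add: algebra_simps sum.distrib sum_distrib_left)

lemma alg3: fixes v F P a B :: real assumes "v \<ge> 0" "P \<noteq> 0"
  shows "F / P * (B * (a - v) * (2 * v + 1) / 2) = (2 * v + 2) * (2 * v + 1) * F / (4 * P) * ((a - v) / (1 + v) * B)"
proof -
  have w: "1 + v \<noteq> 0" using assms by simp
  have e: "P * 4 + P * (v * 4) = 4 * P * (1 + v)" by (simp add: algebra_simps)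
  have "P * 4 + P * (v * 4) \<noteq> 0" unfolding e using w assms by simp
  then show ?thesis using w assms by (simp add: field_simps)
qed

lemma opz_fb: "op_zero (fb b) (2 * \<nu>) = fact (2 * \<nu>) / 2 ^ (2 * \<nu>) * ((- real b / 2) gchoose \<nu>)"
proof (induction \<nu> arbitrary: b)
  case 0
  then show ?case by (simp add: op_zero_def cfn_def central_fact_def fb_def)
next
  case (Suc v)
  define a where "a = - real b / 2"
  let ?F = "fact (2 * v) :: real" and ?P = "(2::real) ^ (2 * v)"
  have ab2: "- real (b + 2) / 2 = a - 1" unfolding a_def by (simp add: field_simps)
  have r: "op_zero (fb b) (2 * Suc v) = real b ^ 2 / 4 * op_zero (fb b) (2 * v)
     + (- (real b * (real b + 1) / 4)) * op_zero (fb (b+2)) (2 * v) - (real (2 * v))^2/4 * op_zero (fb b) (2 * v)"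
    using opz_rec[of "fb b" "2 * v"] unfolding fb_deriv2 opz_lin[OF G_fb G_fb] by simp
  have g: "(a gchoose Suc v) = (a - real v) / real (Suc v) * (a gchoose v)"
    using gbinomial_mult_1[of a v] by (simp add: field_simps)
  have ac: "a * ((a - 1) gchoose v) = (a - real v) * (a gchoose v)"
    using gbinomial_absorb_comp[of a v] by simp
  have bb: "real b * (real b + 1) / 4 = (2 * a - 1) / 2 * a" unfolding a_def by (simp add: field_simps)
  have f: "fact (2 * Suc v) = (2 * real v+2) * (2 * real v+1) * ?F"
    by (simp add: fact_Suc algebra_simps)
  have p: "(2::real) ^ (2 * Suc v) = 4 * ?P" by (simp add: power_add)
  have "op_zero (fb b) (2 * Suc v) = ?F / ?P * ((real b ^ 2 / 4 - real v ^ 2) * (a gchoose v)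
       - (2 * a - 1) / 2 * (a * ((a - 1) gchoose v)))"
    unfolding r Suc.IH ab2 [symmetric] a_def bb[unfolded a_def]
    by (simp add: field_simps power2_eq_square)
  also have "\<dots> = ?F / ?P * ((a gchoose v) * (a - real v) * (2 * real v + 1) / 2)"
    unfolding ac by (simp add: a_def field_simps power2_eq_square)
  also have "\<dots> = fact (2 * Suc v) / 2 ^ (2 * Suc v) * (a gchoose Suc v)"
    unfolding f p g using alg3[of "real v" ?P] by simp
  finally show ?case unfolding a_def .
qed

lemma sum_odd: fixes m :: nat shows "(\<Sum>k<2 * m. (if even k then 0 else g k)) = (\<Sum>j<m. g (2 * j + 1) :: real)"
  by (induction m) (simp_all add: lessThan_Suc)

lemma opz_sinh_sum: "op_zero sinh (2 * \<nu> + 3) = (\<Sum>k = 0..\<nu> + 1. cfn (2 * \<nu> + 3) (2 * k + 1))"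
proof -
  have "op_zero sinh (2 * \<nu> + 3) = (\<Sum>k<2 * (\<nu> + 2). (if even k then 0 else cfn (2 * \<nu> + 3) k))"
    unfolding op_zero_def derivs_sinh
    by (rule sum.cong) (auto simp: lessThan_Suc_atMost[symmetric])
  also have "\<dots> = (\<Sum>j<\<nu> + 2. cfn (2 * \<nu> + 3) (2 * j + 1))" by (rule sum_odd)
  also have "\<dots> = (\<Sum>k = 0..\<nu> + 1. cfn (2 * \<nu> + 3) (2 * k + 1))"
    by (rule sum.cong) auto
  finally show ?thesis .
qed

theorem mainTheorem8:
  fixes \<nu> :: nat
  shows "op_zero (\<lambda>x. 1 / (cosh (x / 2)) ^ 5) (2 * \<nu>)
           = 4 / 3 * op_zero sinh (2 * \<nu> + 3)
       \<and> 4 / 3 * (\<Sum>k = 0..\<nu> + 1. cfn (2 * \<nu> + 3) (2 * k + 1))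
           = fact (2 * \<nu>) / 2 ^ (2 * \<nu>) * ((- 5 / 2 :: real) gchoose \<nu>)"
proof
  show "op_zero (\<lambda>x. 1 / (cosh (x / 2)) ^ 5) (2 * \<nu>) = 4 / 3 * op_zero sinh (2 * \<nu> + 3)"
    using opz_fb[of 5 \<nu>] unfolding opz_sinh by (simp add: fb_def)
  show "4 / 3 * (\<Sum>k = 0..\<nu> + 1. cfn (2 * \<nu> + 3) (2 * k + 1))
           = fact (2 * \<nu>) / 2 ^ (2 * \<nu>) * ((- 5 / 2 :: real) gchoose \<nu>)"
    unfolding opz_sinh_sum[symmetric] by (rule opz_sinh)
qed

end
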